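(* Let $d\ge 2$, $m\ge1$, and for each $u\in\mathbb{R}$, $\mu\in\{1,\ldots,m\}$ let $M_\mu^u\in\mathbb{C}^{d\times d}$ with $\sum_{\mu}(M_\mu^u)^\dagger M_\mu^u=\mathrm{I}$, each $u\mapsto M_\mu^u$ of class $C^2$, and $M_\mu^0=\sum_{n=1}^d c_{\mu,n}|n\rangle\langle n|$ in a fixed orthonormal basis $\{|n\rangle\}$ of $\mathbb{C}^d$. Let $R$ be the $d\times d$ matrix $$R_{n_1,n_2}=\sum_{\mu=1}^m\Big(2\Big|\langle n_1|\tfrac{d (M_\mu^u)^\dagger}{du}\big|_{u=0}|n_2\rangle\Big|^2+2\delta_{n_1,n_2}\,\mathrm{Re}\Big(c_{\mu,n_1}\langle n_1|\tfrac{d^2 (M_\mu^u)^\dagger}{du^2}\big|_{u=0}|n_2\rangle\Big)\Big),$$ and assume the directed graph $G$ of $R$ is strongly connected, i.e., for any $n\neq n'$ in $\{1,\ldots,d\}$ there exist distinct $n_1=n,n_2,\ldots,n_r=n'$ with $R_{n_j,n_{j+1}}\neq0$ for $j=1,\ldots,r-1$. Fix $\bar n\in\{1,\ldots,d\}$. Then there exist $d-1$ strictly positive reals $e_n$, $n\in\{1,\ldots,d\}\setminus\{\bar n\}$, such that: (i) for any reals $\lambda_n$, $n\neq\bar n$, there exists a unique vector $\sigma\in\mathbb{R}^d$ with $\sigma_{\bar n}=0$ and $R\sigma=\lambda$, where $\lambda\in\mathbb{R}^d$ has components $\lambda_n$ for $n\neq\bar n$ and $\lambda_{\bar n}=-\sum_{n\neq\bar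 n}e_n\lambda_n$; if moreover $\lambda_n<0$ for all $n\neq\bar n$, then $\sigma_n>0$ for all $n\neq\bar n$; (ii) for any $\sigma\in\mathbb{R}^d$ with $R\sigma=\lambda\in\mathbb{R}^d$, the function $V_0(\rho)=\sum_{n=1}^d\sigma_n\langle n|\rho|n\rangle$ satisfies $$\frac{d^2}{du^2}V_0\big(\mathbb{K}^u(|n\rangle\langle n|)\big)\Big|_{u=0}=\lambda_n\quad\text{for all } n\in\{1,\ldots,d\},$$ where $\mathbb{K}^u(\rho)=\sum_{\mu=1}^m M_\mu^u\rho (M_\mu^u)^\dagger$.
   Context: $\dagger$ denotes conjugate transpose; $\delta$ is the Kronecker delta. The directed graph of $R$ has vertices $1,\ldots,d$ and an edge $n_1\to n_2$ for each $n_1\neq n_2$ with $R_{n_1,n_2}>0$. *)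

theory Defs
  imports "HOL-Analysis.Analysis"
begin

text \<open>Matrices in the fixed orthonormal basis are represented by their coordinates:
  the basis vector |n> is the standard basis vector indexed by n :: 'n, so
  <n1|A|n2> = A $ n1 $ n2.\<close>

definition cadj :: "complex^'n^'n \<Rightarrow> complex^'n^'n" where
  "cadj A = (\<chi> i j. cnj (A $ j $ i))"

definition ketbra :: "'n::finite \<Rightarrow> complex^'n^'n" where
  "ketbra n = (\<chi> i j. if i = n \<and> j = n then 1 else 0)"

definition diag_mat :: "('n::finite \<Rightarrow> complex) \<Rightarrow> complex^'n^'n" where
  "diag_mat f = (\<chi> i j. if i = j then f i else 0)"

definition kraus :: "(real \<Rightarrow> 'm::finite \<Rightarrow> complex^'n::finite^'n) \<Rightarrow> real \<Rightarrow> complex^'n^'n \<Rightarrow> complex^'n^'n" where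
  "kraus M u \<rho> = (\<Sum>\<mu>\<in>UNIV. M u \<mu> ** \<rho> ** cadj (M u \<mu>))"

definition dadj1 :: "(real \<Rightarrow> 'm \<Rightarrow> complex^'n::finite^'n) \<Rightarrow> 'm \<Rightarrow> complex^'n^'n" where
  "dadj1 M \<mu> = vector_derivative (\<lambda>u. cadj (M u \<mu>)) (at 0)"

definition dadj2 :: "(real \<Rightarrow> 'm \<Rightarrow> complex^'n::finite^'n) \<Rightarrow> 'm \<Rightarrow> complex^'n^'n" where
  "dadj2 M \<mu> = vector_derivative (\<lambda>v. vector_derivative (\<lambda>u. cadj (M u \<mu>)) (at v)) (at 0)"

definition Rmat :: "(real \<Rightarrow> 'm::finite \<Rightarrow> complex^'n::finite^'n) \<Rightarrow> ('m \<Rightarrow> 'n \<Rightarrow> complex) \<Rightarrow> real^'n^'n" where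
  "Rmat M c = (\<chi> n1 n2. \<Sum>\<mu>\<in>UNIV.
      2 * (cmod (dadj1 M \<mu> $ n1 $ n2))\<^sup>2
      + (if n1 = n2 then 2 * Re (c \<mu> n1 * dadj2 M \<mu> $ n1 $ n2) else 0))"

definition V0 :: "real^'n::finite \<Rightarrow> complex^'n^'n \<Rightarrow> complex" where
  "V0 \<sigma> \<rho> = (\<Sum>n\<in>UNIV. complex_of_real (\<sigma> $ n) * \<rho> $ n $ n)"

definition C2 :: "(real \<Rightarrow> complex^'n::finite^'n) \<Rightarrow> bool" where
  "C2 f \<longleftrightarrow> (\<exists>f1 f2. (\<forall>u. (f has_vector_derivative f1 u) (at u))
      \<and> (\<forall>u. (f1 has_vector_derivative f2 u) (at u)) \<and> continuous_on UNIV f2)"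

definition strongly_connected :: "real^'n::finite^'n \<Rightarrow> bool" where
  "strongly_connected R \<longleftrightarrow> (\<forall>n n'. n \<noteq> n' \<longrightarrow>
     (\<exists>ps. ps \<noteq> [] \<and> distinct ps \<and> hd ps = n \<and> last ps = n' \<and>
        (\<forall>j. j + 1 < length ps \<longrightarrow> R $ (ps ! j) $ (ps ! (j + 1)) \<noteq> 0)))"

end

theory Submission
  imports Defs
begin

lemma cadj_bl: "bounded_linear (cadj :: complex^'n::finite^'n \<Rightarrow> _)"
proof -
  have "linear (cadj :: complex^'n::finite^'n \<Rightarrow> _)"
    by (auto simp: linear_iff cadj_def vec_eq_iff)
  then show ?thesis by (simp add: linear_conv_bounded_linear)
qed

lemma nth2_bl: "bounded_linear (\<lambda>x::'a::real_normed_vector^'n::finite^'k::finite. x $ k $ n)"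
  by (rule bounded_linear_compose[OF bounded_linear_vec_nth bounded_linear_vec_nth])

lemma second_deriv:
  assumes "\<And>u. (F has_vector_derivative F1 u) (at u)" "\<And>u. (F1 has_vector_derivative F2 u) (at u)"
  shows "vector_derivative (\<lambda>v. vector_derivative F (at v)) (at 0) = F2 0"
proof -
  have "(\<lambda>v. vector_derivative F (at v)) = F1"
    using assms(1) vector_derivative_at by blast
  then show ?thesis using assms(2) by (simp add: vector_derivative_at)
qed

lemma kraus_diag:
  "(A ** ketbra n ** cadj A) $ k $ k = A $ k $ n * cnj (A $ k $ n)"
proof -
  have h: "A ** ketbra n = (\<chi> i j. if j = n then A $ i $ n else 0)"
    by (auto simp: vec_eq_iff matrix_matrix_mult_def ketbra_def if_distrib cong: if_cong)
  have e: "\<And>P (a::complex) b. (if P then a else 0) * b = (if P then a * b else 0)" by simp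
  show ?thesis unfolding h
    by (simp add: matrix_matrix_mult_def cadj_def e)
qed

lemma term_eq:
  fixes a0 a1 a2 c :: complex
  assumes "a0 = (if k = n then c else 0)"
  shows "a0 * cnj a2 + a1 * cnj a1 + (a1 * cnj a1 + a2 * cnj a0) =
    complex_of_real (2 * (cmod (cnj a1))\<^sup>2 + (if n = k then 2 * Re (c * cnj a2) else 0))"
  using assms by (auto simp: complex_eq_iff power2_eq_square cmod_def)

lemma part2:
  fixes M :: "real \<Rightarrow> 'm::finite \<Rightarrow> complex^'n::finite^'n"
  assumes smooth: "\<And>\<mu>. C2 (\<lambda>u. M u \<mu>)"
    and diag0: "\<And>\<mu>. M 0 \<mu> = diag_mat (c \<mu>)"
  shows "vector_derivative
              (\<lambda>v. vector_derivative (\<lambda>u. V0 \<sigma> (kraus M u (ketbra n))) (at v)) (at 0)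
            = complex_of_real ((Rmat M c *v \<sigma>) $ n)"
proof -
  have "\<forall>\<mu>. \<exists>f1 f2. (\<forall>u. ((\<lambda>u. M u \<mu>) has_vector_derivative f1 u) (at u))
      \<and> (\<forall>u. (f1 has_vector_derivative f2 u) (at u))"
    using smooth unfolding C2_def by blast
  then obtain f1 f2 where d1: "\<And>\<mu> u. ((\<lambda>u. M u \<mu>) has_vector_derivative f1 \<mu> u) (at u)"
    and d2: "\<And>\<mu> u. (f1 \<mu> has_vector_derivative f2 \<mu> u) (at u)"
    by metis
  define a where "a \<mu> k u = M u \<mu> $ k $ n" for \<mu> k u
  define a1 where "a1 \<mu> k u = f1 \<mu> u $ k $ n" for \<mu> k u
  define a2 where "a2 \<mu> k u = f2 \<mu> u $ k $ n" for \<mu> k u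
  have da: "((a \<mu> k) has_vector_derivative a1 \<mu> k u) (at u)" for \<mu> k u
    unfolding a_def a1_def using bounded_linear.has_vector_derivative[OF nth2_bl d1] by simp
  have da1: "((a1 \<mu> k) has_vector_derivative a2 \<mu> k u) (at u)" for \<mu> k u
    unfolding a1_def a2_def using bounded_linear.has_vector_derivative[OF nth2_bl d2] by simp
  have F: "V0 \<sigma> (kraus M u (ketbra n)) =
      (\<Sum>k\<in>UNIV. complex_of_real (\<sigma> $ k) * (\<Sum>\<mu>\<in>UNIV. a \<mu> k u * cnj (a \<mu> k u)))" for u
    by (simp add: V0_def kraus_def kraus_diag a_def)
  define F1 where "F1 u = (\<Sum>k\<in>UNIV. complex_of_real (\<sigma> $ k) *
      (\<Sum>\<mu>\<in>UNIV. a \<mu> k u * cnj (a1 \<mu> k u) + a1 \<mu> k u * cnj (a \<mu> k u)))" for u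
  define F2 where "F2 u = (\<Sum>k\<in>UNIV. complex_of_real (\<sigma> $ k) *
      (\<Sum>\<mu>\<in>UNIV. (a \<mu> k u * cnj (a2 \<mu> k u) + a1 \<mu> k u * cnj (a1 \<mu> k u))
          + (a1 \<mu> k u * cnj (a1 \<mu> k u) + a2 \<mu> k u * cnj (a \<mu> k u))))" for u
  have dF: "((\<lambda>u. V0 \<sigma> (kraus M u (ketbra n))) has_vector_derivative F1 u) (at u)" for u
    unfolding F F1_def
    by (intro has_vector_derivative_sum has_vector_derivative_mult_right
        has_vector_derivative_mult has_vector_derivative_cnj da)
  have dF1: "(F1 has_vector_derivative F2 u) (at u)" for u
    unfolding F1_def F2_def
    by (intro has_vector_derivative_sum has_vector_derivative_mult_right has_vector_derivative_add
        has_vector_derivative_mult has_vector_derivative_cnj da da1)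
  have dadj1: "dadj1 M \<mu> = cadj (f1 \<mu> 0)" for \<mu>
    unfolding dadj1_def
    using bounded_linear.has_vector_derivative[OF cadj_bl d1] vector_derivative_at by blast
  have "(\<lambda>v. vector_derivative (\<lambda>u. cadj (M u \<mu>)) (at v)) = (\<lambda>v. cadj (f1 \<mu> v))" for \<mu>
    using bounded_linear.has_vector_derivative[OF cadj_bl d1] vector_derivative_at by blast
  then have dadj2: "dadj2 M \<mu> = cadj (f2 \<mu> 0)" for \<mu>
    unfolding dadj2_def
    using bounded_linear.has_vector_derivative[OF cadj_bl d2] vector_derivative_at by metis
  have a0: "a \<mu> k 0 = (if k = n then c \<mu> n else 0)" for \<mu> k
    by (simp add: a_def diag0 diag_mat_def)
  have e1: "dadj1 M \<mu> $ n $ k = cnj (a1 \<mu> k 0)" for \<mu> k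
    by (simp add: dadj1 cadj_def a1_def)
  have e2: "dadj2 M \<mu> $ n $ k = cnj (a2 \<mu> k 0)" for \<mu> k
    by (simp add: dadj2 cadj_def a2_def)
  have t: "(a \<mu> k 0 * cnj (a2 \<mu> k 0) + a1 \<mu> k 0 * cnj (a1 \<mu> k 0))
          + (a1 \<mu> k 0 * cnj (a1 \<mu> k 0) + a2 \<mu> k 0 * cnj (a \<mu> k 0))
     = complex_of_real (2 * (cmod (dadj1 M \<mu> $ n $ k))\<^sup>2
         + (if n = k then 2 * Re (c \<mu> n * dadj2 M \<mu> $ n $ k) else 0))" for \<mu> k
    unfolding e1 e2 by (rule term_eq[OF a0])
  have "F2 0 = complex_of_real ((Rmat M c *v \<sigma>) $ n)"
    unfolding F2_def t
    by (simp add: matrix_vector_mult_def Rmat_def of_real_sum mult.commute)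
  then show ?thesis using second_deriv[OF dF dF1] by simp
qed

lemma rowsum:
  fixes M :: "real \<Rightarrow> 'm::finite \<Rightarrow> complex^'n::finite^'n"
  assumes trace_pres: "\<And>u. (\<Sum>\<mu>\<in>UNIV. cadj (M u \<mu>) ** M u \<mu>) = mat 1"
    and smooth: "\<And>\<mu>. C2 (\<lambda>u. M u \<mu>)"
    and diag0: "\<And>\<mu>. M 0 \<mu> = diag_mat (c \<mu>)"
  shows "(\<Sum>k\<in>UNIV. Rmat M c $ n $ k) = 0"
proof -
  have tr: "(\<Sum>\<mu>\<in>UNIV. \<Sum>k\<in>UNIV. cnj (M u \<mu> $ k $ n) * M u \<mu> $ k $ n) = 1" for u
    using arg_cong[of _ _ "\<lambda>X. X $ n $ n", OF trace_pres[of u]]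
    by (simp add: matrix_matrix_mult_def cadj_def mat_def)
  have c1: "V0 (\<chi> k. 1) (kraus M u (ketbra n)) = 1" for u
  proof -
    have "V0 (\<chi> k. 1) (kraus M u (ketbra n)) =
        (\<Sum>k\<in>UNIV. \<Sum>\<mu>\<in>UNIV. M u \<mu> $ k $ n * cnj (M u \<mu> $ k $ n))"
      by (simp add: V0_def kraus_def kraus_diag)
    also have "\<dots> = 1" using tr[of u] by (subst sum.swap) (simp add: mult.commute)
    finally show ?thesis .
  qed
  have "vector_derivative (\<lambda>v. vector_derivative (\<lambda>u. V0 (\<chi> k. 1) (kraus M u (ketbra n))) (at v)) (at 0) = 0"
    unfolding c1 by (rule second_deriv) (rule has_vector_derivative_const)+
  then have "complex_of_real ((Rmat M c *v (\<chi> k. 1)) $ n) = 0"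
    using part2[where M=M and c=c and \<sigma>="\<chi> k. 1" and n=n, OF smooth diag0] by simp
  then show ?thesis by (simp add: matrix_vector_mult_def flip: of_real_sum)
qed

lemma path_ind:
  assumes "P (ps ! s)" "\<And>i. s \<le> i \<Longrightarrow> i + 1 < length ps \<Longrightarrow> P (ps ! i) \<Longrightarrow> P (ps ! (i + 1))"
  shows "s \<le> i \<Longrightarrow> i < length ps \<Longrightarrow> P (ps ! i)"
proof (induction i)
  case 0
  then show ?case using assms(1) by simp
next
  case (Suc i)
  show ?case
  proof (cases "s = Suc i")
    case True then show ?thesis using assms(1) by simp
  next
    case False
    then have "s \<le> i" using Suc.prems by simp
    then show ?thesis using Suc assms(2)[of i] by simp
  qed
qed

lemma rowexp:
  fixes R :: "real^'n::finite^'n"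
  assumes rs: "\<And>j. (\<Sum>k\<in>UNIV. R $ j $ k) = 0"
  shows "(R *v \<sigma>) $ k = (\<Sum>j\<in>UNIV. R $ k $ j * (\<sigma> $ j - \<sigma> $ k))"
proof -
  have "(\<Sum>j\<in>UNIV. R $ k $ j * (\<sigma> $ j - \<sigma> $ k)) =
      (\<Sum>j\<in>UNIV. R $ k $ j * \<sigma> $ j) - (\<Sum>j\<in>UNIV. R $ k $ j) * \<sigma> $ k"
    by (simp add: right_diff_distrib sum_subtractf sum_distrib_right)
  then show ?thesis using rs[of k] by (simp add: matrix_vector_mult_def)
qed

lemma weak_min:
  fixes R :: "real^'n::finite^'n"
  assumes off: "\<And>j k. j \<noteq> k \<Longrightarrow> R $ j $ k \<ge> 0"
    and rs: "\<And>j. (\<Sum>k\<in>UNIV. R $ j $ k) = 0"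
    and sc: "strongly_connected R"
    and s0: "\<sigma> $ nb = 0"
    and neg: "\<And>k. k \<noteq> nb \<Longrightarrow> (R *v \<sigma>) $ k \<le> 0"
  shows "\<sigma> $ k \<ge> 0"
proof (rule ccontr)
  assume "\<not> \<sigma> $ k \<ge> 0"
  define m where "m = Min (range (($) \<sigma>))"
  have mle: "m \<le> \<sigma> $ j" for j unfolding m_def by (rule Min_le) auto
  have "m \<in> range (($) \<sigma>)" unfolding m_def by (rule Min_in) auto
  then obtain k0 where k0: "\<sigma> $ k0 = m" by auto
  have mneg: "m < 0" using mle[of k] \<open>\<not> \<sigma> $ k \<ge> 0\<close> by simp
  have step: "\<sigma> $ j = m" if "\<sigma> $ i = m" "R $ i $ j \<noteq> 0" for i j
  proof -
    have "i \<noteq> nb" using that s0 mneg by auto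
    have nn: "\<forall>x\<in>UNIV. 0 \<le> R $ i $ x * (\<sigma> $ x - m)"
    proof
      fix x show "0 \<le> R $ i $ x * (\<sigma> $ x - m)"
        using off[of i x] mle[of x] that(1) by (cases "x = i") (auto intro!: mult_nonneg_nonneg)
    qed
    have "(\<Sum>x\<in>UNIV. R $ i $ x * (\<sigma> $ x - m)) \<le> 0"
      using neg[OF \<open>i \<noteq> nb\<close>] rowexp[OF rs, of \<sigma> i] that(1) by simp
    then have "(\<Sum>x\<in>UNIV. R $ i $ x * (\<sigma> $ x - m)) = 0"
      using nn by (smt (verit) sum_nonneg)
    then have "R $ i $ j * (\<sigma> $ j - m) = 0"
      by (subst (asm) sum_nonneg_eq_0_iff) (use nn in auto)
    then show ?thesis using that(2) by simp
  qed
  have "k0 \<noteq> nb" using k0 s0 mneg by auto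
  then obtain ps where ps: "ps \<noteq> []" "distinct ps" "hd ps = k0" "last ps = nb"
    "\<forall>j. j + 1 < length ps \<longrightarrow> R $ (ps ! j) $ (ps ! (j + 1)) \<noteq> 0"
    using sc unfolding strongly_connected_def by blast
  have "\<sigma> $ (ps ! i) = m" if "i < length ps" for i
    using path_ind[where P="\<lambda>x. \<sigma> $ x = m" and ps=ps and s=0 and i=i] that ps step
      k0 hd_conv_nth[OF ps(1)] by auto
  then have "\<sigma> $ nb = m" using ps(1,4) last_conv_nth[OF ps(1)] by auto
  then show False using s0 mneg by simp
qed

lemma strict_min:
  fixes R :: "real^'n::finite^'n"
  assumes off: "\<And>j k. j \<noteq> k \<Longrightarrow> R $ j $ k \<ge> 0"
    and rs: "\<And>j. (\<Sum>k\<in>UNIV. R $ j $ k) = 0"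
    and sc: "strongly_connected R"
    and s0: "\<sigma> $ nb = 0"
    and neg: "\<And>k. k \<noteq> nb \<Longrightarrow> (R *v \<sigma>) $ k < 0"
    and kn: "k \<noteq> nb"
  shows "\<sigma> $ k > 0"
proof (rule ccontr)
  have ge: "\<sigma> $ j \<ge> 0" for j
  proof (rule weak_min[OF off rs sc s0])
    fix k :: 'n assume "k \<noteq> nb" then show "(R *v \<sigma>) $ k \<le> 0" using neg[of k] by simp
  qed
  assume "\<not> \<sigma> $ k > 0"
  then have z: "\<sigma> $ k = 0" using ge[of k] by simp
  have "\<forall>x\<in>UNIV. 0 \<le> R $ k $ x * (\<sigma> $ x - \<sigma> $ k)"
  proof
    fix x show "0 \<le> R $ k $ x * (\<sigma> $ x - \<sigma> $ k)"
      using off[of k x] ge[of x] z by (cases "x = k") (auto intro!: mult_nonneg_nonneg)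
  qed
  then have "(R *v \<sigma>) $ k \<ge> 0" unfolding rowexp[OF rs] by (intro sum_nonneg) auto
  then show False using neg[OF kn] by simp
qed

lemma epos:
  fixes R :: "real^'n::finite^'n"
  assumes off: "\<And>j k. j \<noteq> k \<Longrightarrow> R $ j $ k \<ge> 0"
    and rs: "\<And>j. (\<Sum>k\<in>UNIV. R $ j $ k) = 0"
    and sc: "strongly_connected R"
    and s0: "\<sigma> $ nb = 0"
    and nnb: "n \<noteq> nb"
    and eq: "\<And>k. k \<noteq> nb \<Longrightarrow> (R *v \<sigma>) $ k = (if k = n then -1 else 0)"
  shows "(R *v \<sigma>) $ nb > 0"
proof -
  have ge: "\<sigma> $ j \<ge> 0" for j
  proof (rule weak_min[OF off rs sc s0])
    fix k :: 'n assume "k \<noteq> nb" then show "(R *v \<sigma>) $ k \<le> 0" using eq[of k] by simp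
  qed
  have nnx: "\<forall>x\<in>UNIV. 0 \<le> R $ i $ x * (\<sigma> $ x - \<sigma> $ i)" if "\<sigma> $ i = 0" for i
  proof
    fix x show "0 \<le> R $ i $ x * (\<sigma> $ x - \<sigma> $ i)"
      using off[of i x] ge[of x] that by (cases "x = i") (auto intro!: mult_nonneg_nonneg)
  qed
  have sn: "\<sigma> $ n > 0"
  proof (rule ccontr)
    assume "\<not> \<sigma> $ n > 0"
    then have z: "\<sigma> $ n = 0" using ge[of n] by simp
    have "(R *v \<sigma>) $ n \<ge> 0" unfolding rowexp[OF rs] using nnx[OF z] by (intro sum_nonneg) auto
    then show False using eq[OF nnb] by simp
  qed
  have step: "\<sigma> $ j = 0" if "i \<noteq> nb" "\<sigma> $ i = 0" "R $ i $ j \<noteq> 0" for i j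
  proof -
    have "i \<noteq> n" using that sn by auto
    have "(\<Sum>x\<in>UNIV. R $ i $ x * (\<sigma> $ x - \<sigma> $ i)) = 0"
      using eq[OF that(1)] \<open>i \<noteq> n\<close> rowexp[OF rs, of \<sigma> i] by simp
    then have "R $ i $ j * (\<sigma> $ j - \<sigma> $ i) = 0"
      by (subst (asm) sum_nonneg_eq_0_iff) (use nnx[OF that(2)] in auto)
    then show ?thesis using that by simp
  qed
  obtain ps where ps: "ps \<noteq> []" "distinct ps" "hd ps = nb" "last ps = n"
    "\<forall>j. j + 1 < length ps \<longrightarrow> R $ (ps ! j) $ (ps ! (j + 1)) \<noteq> 0"
    using sc[unfolded strongly_connected_def, rule_format, OF nnb[symmetric]] by auto
  have p0: "ps ! 0 = nb" using hd_conv_nth[OF ps(1)] ps(3) by simp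
  have len: "length ps \<ge> 2"
  proof (rule ccontr)
    assume "\<not> length ps \<ge> 2"
    moreover have "length ps \<noteq> 0" using ps(1) by simp
    ultimately have "length ps = 1" by linarith
    then show False using p0 last_conv_nth[OF ps(1)] ps(4) nnb by simp
  qed
  have pnb: "ps ! i \<noteq> nb" if "1 \<le> i" "i < length ps" for i
    using nth_eq_iff_index_eq[OF ps(2), of i 0] that p0 ps(1) by simp
  have sp1: "\<sigma> $ (ps ! 1) > 0"
  proof (rule ccontr)
    assume "\<not> \<sigma> $ (ps ! 1) > 0"
    then have "\<sigma> $ (ps ! 1) = 0" using ge[of "ps ! 1"] by linarith
    then have z1: "\<sigma> $ (ps ! 1) = 0" .
    have st: "\<sigma> $ (ps ! (i + 1)) = 0" if "1 \<le> i" "i + 1 < length ps" "\<sigma> $ (ps ! i) = 0" for i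
      using step[OF pnb[of i] that(3)] that ps(5) by simp
    have "\<sigma> $ (ps ! i) = 0" if "1 \<le> i" "i < length ps" for i
      using path_ind[where P="\<lambda>x. \<sigma> $ x = 0" and ps=ps and s=1 and i=i, OF z1 st] that by blast
    then have "\<sigma> $ (ps ! (length ps - 1)) = 0" using len by simp
    then have "\<sigma> $ n = 0" using ps(4) last_conv_nth[OF ps(1)] by simp
    then show False using sn by simp
  qed
  have p1: "ps ! 1 \<noteq> nb" using pnb len by auto
  have "R $ nb $ (ps ! 1) \<noteq> 0" using ps(5)[rule_format, of 0] p0 len by simp
  then have R1: "R $ nb $ (ps ! 1) > 0" using off[OF p1[symmetric]] by simp
  have nn: "\<forall>x\<in>UNIV. 0 \<le> R $ nb $ x * (\<sigma> $ x - \<sigma> $ nb)" using nnx[OF s0] .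
  have "R $ nb $ (ps ! 1) * (\<sigma> $ (ps ! 1) - \<sigma> $ nb) \<le> (\<Sum>x\<in>UNIV. R $ nb $ x * (\<sigma> $ x - \<sigma> $ nb))"
    by (rule member_le_sum) (use nn in auto)
  moreover have "R $ nb $ (ps ! 1) * (\<sigma> $ (ps ! 1) - \<sigma> $ nb) > 0" using R1 sp1 s0 by simp
  ultimately show ?thesis using rowexp[OF rs, of \<sigma> nb] by simp
qed

theorem lemma2:
  fixes M :: "real \<Rightarrow> 'm::finite \<Rightarrow> complex^'n::finite^'n"
    and c :: "'m \<Rightarrow> 'n \<Rightarrow> complex"
    and nb :: 'n
  assumes d2: "CARD('n) \<ge> 2"
    and trace_pres: "\<And>u. (\<Sum>\<mu>\<in>UNIV. cadj (M u \<mu>) ** M u \<mu>) = mat 1"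
    and smooth: "\<And>\<mu>. C2 (\<lambda>u. M u \<mu>)"
    and diag0: "\<And>\<mu>. M 0 \<mu> = diag_mat (c \<mu>)"
    and conn: "strongly_connected (Rmat M c)"
  shows "\<exists>e :: 'n \<Rightarrow> real. (\<forall>n. n \<noteq> nb \<longrightarrow> e n > 0) \<and>
    (\<forall>lam :: 'n \<Rightarrow> real.
       let \<Lambda> = (\<chi> n. if n = nb then - (\<Sum>k\<in>UNIV - {nb}. e k * lam k) else lam n) in
       (\<exists>!\<sigma> :: real^'n. \<sigma> $ nb = 0 \<and> Rmat M c *v \<sigma> = \<Lambda>) \<and>
       ((\<forall>n. n \<noteq> nb \<longrightarrow> lam n < 0) \<longrightarrow>
          (\<forall>\<sigma> :: real^'n. \<sigma> $ nb = 0 \<and> Rmat M c *v \<sigma> = \<Lambda> \<longrightarrow>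
              (\<forall>n. n \<noteq> nb \<longrightarrow> \<sigma> $ n > 0)))) \<and>
    (\<forall>\<sigma> \<Lambda> :: real^'n. Rmat M c *v \<sigma> = \<Lambda> \<longrightarrow>
       (\<forall>n. vector_derivative
              (\<lambda>v. vector_derivative (\<lambda>u. V0 \<sigma> (kraus M u (ketbra n))) (at v)) (at 0)
            = complex_of_real (\<Lambda> $ n)))"
proof -
  define R where "R = Rmat M c"
  have off: "\<And>j k. j \<noteq> k \<Longrightarrow> R $ j $ k \<ge> 0"
    by (simp add: R_def Rmat_def sum_nonneg)
  have rs: "\<And>j. (\<Sum>k\<in>UNIV. R $ j $ k) = 0"
    unfolding R_def by (rule rowsum[OF trace_pres smooth diag0])
  have sc: "strongly_connected R" using conn by (simp add: R_def)
  define L where "L \<sigma> = (\<chi> k. if k = nb then \<sigma> $ nb else (R *v \<sigma>) $ k)" for \<sigma> :: "real^'n"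
  have linR: "linear ((*v) R)" by simp
  have linL: "linear L"
    unfolding linear_iff
  proof (intro conjI allI)
    fix x y :: "real^'n" and r :: real
    show "L (x + y) = L x + L y"
      by (simp add: L_def vec_eq_iff linear_add[OF linR])
    show "L (r *\<^sub>R x) = r *\<^sub>R L x"
      by (simp add: L_def vec_eq_iff linear_scale[OF linR])
  qed
  have inj0: "d = 0" if "L d = 0" for d
  proof -
    have d0: "d $ nb = 0" using arg_cong[OF that, of "\<lambda>v. v $ nb"] by (simp add: L_def)
    have dk: "(R *v d) $ k = 0" if "k \<noteq> nb" for k
      using arg_cong[OF \<open>L d = 0\<close>, of "\<lambda>v. v $ k"] that by (simp add: L_def)
    have ge: "d $ k \<ge> 0" for k
    proof (rule weak_min[OF off rs sc d0])
      fix k :: 'n assume "k \<noteq> nb" then show "(R *v d) $ k \<le> 0" using dk[of k] by simp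
    qed
    have md0: "(- d) $ nb = 0" using d0 by simp
    have le: "(- d) $ k \<ge> 0" for k
    proof (rule weak_min[OF off rs sc md0])
      fix k :: 'n assume "k \<noteq> nb"
      then show "(R *v (- d)) $ k \<le> 0" using dk[of k] linear_neg[OF linR, of d] by simp
    qed
    show ?thesis using ge le by (simp add: vec_eq_iff order.antisym)
  qed
  have injL: "inj L"
  proof (rule injI)
    fix x y assume "L x = L y"
    then have "L (x - y) = 0" by (simp add: linear_diff[OF linL])
    then have "x - y = 0" by (rule inj0)
    then show "x = y" by simp
  qed
  have surjL: "surj L" by (rule linear_inj_imp_surj[OF linL injL])
  define sk where "sk k = inv L (axis k (-1))" for k
  have Lsk: "L (sk k) = axis k (-1)" for k
    unfolding sk_def by (rule surj_f_inv_f[OF surjL])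
  have sk0: "sk k $ nb = 0" if "k \<noteq> nb" for k
    using arg_cong[OF Lsk[of k], of "\<lambda>v. v $ nb"] that by (simp add: L_def axis_def)
  have skR: "(R *v sk k) $ j = (if j = k then -1 else 0)" if "j \<noteq> nb" for j k
    using arg_cong[OF Lsk[of k], of "\<lambda>v. v $ j"] that by (simp add: L_def axis_def)
  define e where "e k = (R *v sk k) $ nb" for k
  have epos': "e n > 0" if "n \<noteq> nb" for n
    unfolding e_def
    apply (rule epos[OF off rs sc sk0[OF that] that])
     apply simp
    apply (erule skR)
    done
  have part1: "let \<Lambda> = (\<chi> n. if n = nb then - (\<Sum>k\<in>UNIV - {nb}. e k * lam k) else lam n) in
       (\<exists>!\<sigma> :: real^'n. \<sigma> $ nb = 0 \<and> R *v \<sigma> = \<Lambda>) \<and>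
       ((\<forall>n. n \<noteq> nb \<longrightarrow> lam n < 0) \<longrightarrow>
          (\<forall>\<sigma> :: real^'n. \<sigma> $ nb = 0 \<and> R *v \<sigma> = \<Lambda> \<longrightarrow>
              (\<forall>n. n \<noteq> nb \<longrightarrow> \<sigma> $ n > 0)))" for lam
  proof -
    define \<Lambda> where "\<Lambda> = (\<chi> n. if n = nb then - (\<Sum>k\<in>UNIV - {nb}. e k * lam k) else lam n)"
    define \<tau> where "\<tau> = (\<Sum>k\<in>UNIV - {nb}. (- lam k) *\<^sub>R sk k)"
    have t0: "\<tau> $ nb = 0" unfolding \<tau>_def by (simp add: sk0)
    have Rt: "R *v \<tau> = (\<Sum>k\<in>UNIV - {nb}. (- lam k) *\<^sub>R (R *v sk k))"
      unfolding \<tau>_def by (simp add: linear_sum[OF linR] linear_scale[OF linR] linear_neg[OF linR])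
    have "R *v \<tau> = \<Lambda>"
    proof (subst vec_eq_iff, intro allI)
      fix j
      show "(R *v \<tau>) $ j = \<Lambda> $ j"
      proof (cases "j = nb")
        case True
        then show ?thesis unfolding Rt \<Lambda>_def by (simp add: e_def sum_negf mult.commute)
      next
        case False
        have "(R *v \<tau>) $ j = (\<Sum>k\<in>UNIV - {nb}. (- lam k) * (if j = k then -1 else 0))"
          unfolding Rt using False by (simp add: skR)
        also have "\<dots> = (\<Sum>k\<in>UNIV - {nb}. if k = j then lam j else 0)"
          by (rule sum.cong) auto
        also have "\<dots> = lam j" using False by simp
        finally show ?thesis using False by (simp add: \<Lambda>_def)
      qed
    qed
    have uniq: "\<sigma>1 = \<sigma>2" if "\<sigma>1 $ nb = 0 \<and> R *v \<sigma>1 = \<Lambda>" "\<sigma>2 $ nb = 0 \<and> R *v \<sigma>2 = \<Lambda>"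
      for \<sigma>1 \<sigma>2
    proof -
      from that have a: "\<sigma>1 $ nb = \<sigma>2 $ nb" "R *v \<sigma>1 = R *v \<sigma>2" by auto
      have "L \<sigma>1 = L \<sigma>2" unfolding L_def a by simp
      then show ?thesis using injL by (simp add: inj_eq)
    qed
    have ex1: "\<exists>!\<sigma> :: real^'n. \<sigma> $ nb = 0 \<and> R *v \<sigma> = \<Lambda>"
      using t0 \<open>R *v \<tau> = \<Lambda>\<close> uniq by blast
    have pos: "\<sigma> $ n > 0"
      if "\<forall>n. n \<noteq> nb \<longrightarrow> lam n < 0" "\<sigma> $ nb = 0" "R *v \<sigma> = \<Lambda>" "n \<noteq> nb" for \<sigma> n
    proof (rule strict_min[OF off rs sc that(2) _ that(4)])
      fix k :: 'n assume "k \<noteq> nb"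
      then show "(R *v \<sigma>) $ k < 0" using that(1,3) by (simp add: \<Lambda>_def)
    qed
    show ?thesis unfolding Let_def \<Lambda>_def[symmetric] using ex1 pos by blast
  qed
  show ?thesis
    apply (rule exI[of _ e])
    apply (intro conjI allI impI)
    subgoal using epos' by blast
    subgoal for lam using part1[of lam] by (simp add: R_def)
    subgoal for \<sigma> \<Lambda> n using part2[where M=M and c=c and \<sigma>=\<sigma> and n=n, OF smooth diag0] by simp
    done
qed



end
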